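(* Let $G$ be a connected bipartite graph with an even number $q$ of edges that contains exactly one pendant vertex (vertex of degree $1$). Then $\chi_{la}(G)\ge 3$.
   Context: For a connected graph $G=(V,E)$ with $q=|E|$, a local antimagic labeling is a bijection $f:E\to\{1,\dots,q\}$ such that for every pair of adjacent vertices $x,y$ we have $f^+(x)\ne f^+(y)$, where $f^+(x)=\sum f(e)$ over all edges $e$ incident to $x$. The color number $c(f)$ is the number of distinct values of $f^+$, and the local antimagic chromatic number $\chi_{la}(G)$ is the minimum of $c(f)$ over all local antimagic labelings $f$ of $G$. *)

theory Defs
  imports Main
begin

definition simple_graph :: "'a set \<Rightarrow> 'a set set \<Rightarrow> bool" where
  "simple_graph V E \<longleftrightarrow> finite V \<and> (\<forall>e\<in>E. e \<subseteq> V \<and> card e = 2)"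

definition adjacent :: "'a set set \<Rightarrow> 'a \<Rightarrow> 'a \<Rightarrow> bool" where
  "adjacent E x y \<longleftrightarrow> {x, y} \<in> E"

definition connected_graph :: "'a set \<Rightarrow> 'a set set \<Rightarrow> bool" where
  "connected_graph V E \<longleftrightarrow> V \<noteq> {} \<and>
     (\<forall>u\<in>V. \<forall>v\<in>V. (u, v) \<in> {(x, y). adjacent E x y}\<^sup>*)"

definition bipartite_graph :: "'a set \<Rightarrow> 'a set set \<Rightarrow> bool" where
  "bipartite_graph V E \<longleftrightarrow> (\<exists>A\<subseteq>V. \<forall>e\<in>E. card (e \<inter> A) = 1)"

definition incident_edges :: "'a set set \<Rightarrow> 'a \<Rightarrow> 'a set set" where
  "incident_edges E x = {e\<in>E. x \<in> e}"

definition degree :: "'a set set \<Rightarrow> 'a \<Rightarrow> nat" where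
  "degree E x = card (incident_edges E x)"

definition pendant_vertices :: "'a set \<Rightarrow> 'a set set \<Rightarrow> 'a set" where
  "pendant_vertices V E = {v\<in>V. degree E v = 1}"

definition vertex_sum :: "'a set set \<Rightarrow> ('a set \<Rightarrow> nat) \<Rightarrow> 'a \<Rightarrow> nat" where
  "vertex_sum E f x = (\<Sum>e\<in>incident_edges E x. f e)"

definition local_antimagic_labeling :: "'a set \<Rightarrow> 'a set set \<Rightarrow> ('a set \<Rightarrow> nat) \<Rightarrow> bool" where
  "local_antimagic_labeling V E f \<longleftrightarrow>
     bij_betw f E {1..card E} \<and>
     (\<forall>x\<in>V. \<forall>y\<in>V. adjacent E x y \<longrightarrow> vertex_sum E f x \<noteq> vertex_sum E f y)"

definition color_number :: "'a set \<Rightarrow> 'a set set \<Rightarrow> ('a set \<Rightarrow> nat) \<Rightarrow> nat" where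
  "color_number V E f = card (vertex_sum E f ` V)"

end

theory Submission
  imports Defs
begin

lemma double_count:
  assumes "finite E" "finite X"
  shows "(\<Sum>x\<in>X. \<Sum>e\<in>incident_edges E x. g e) = (\<Sum>e\<in>E. g e * card (e \<inter> X))"
proof -
  have "(\<Sum>x\<in>X. \<Sum>e\<in>incident_edges E x. g e) = (\<Sum>x\<in>X. \<Sum>e\<in>E. if x \<in> e then g e else 0)"
    unfolding incident_edges_def using assms by (simp add: sum.inter_filter)
  also have "\<dots> = (\<Sum>e\<in>E. \<Sum>x\<in>X. if x \<in> e then g e else 0)" by (rule sum.swap)
  also have "\<dots> = (\<Sum>e\<in>E. g e * card (e \<inter> X))"
  proof (rule sum.cong)
    fix e assume "e \<in> E"
    have "(\<Sum>x\<in>X. if x \<in> e then g e else 0) = (\<Sum>x\<in>{x\<in>X. x \<in> e}. g e)"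
      using assms(2) sum.inter_filter[of X "\<lambda>_. g e" "\<lambda>x. x\<in>e"] by simp
    also have "{x\<in>X. x \<in> e} = e \<inter> X" by blast
    finally show "(\<Sum>x\<in>X. if x \<in> e then g e else 0) = g e * card (e \<inter> X)" by simp
  qed simp
  finally show ?thesis .
qed

theorem mainTheorem2:
  fixes V :: "'a set" and E :: "'a set set"
  assumes "simple_graph V E"
    and "connected_graph V E"
    and "bipartite_graph V E"
    and "even (card E)"
    and "card (pendant_vertices V E) = 1"
  shows "\<forall>f. local_antimagic_labeling V E f \<longrightarrow> 3 \<le> color_number V E f"
proof (intro allI impI)
  fix f assume L: "local_antimagic_labeling V E f"
  have bij: "bij_betw f E {1..card E}" and adj: "\<And>x y. x \<in> V \<Longrightarrow> y \<in> V \<Longrightarrow> adjacent E x y \<Longrightarrow> vertex_sum E f x \<noteq> vertex_sum E f y"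
    using L unfolding local_antimagic_labeling_def by auto
  have finV: "finite V" and Ee: "\<And>e. e \<in> E \<Longrightarrow> e \<subseteq> V \<and> card e = 2"
    using assms(1) unfolding simple_graph_def by auto
  have finE: "finite E"
    by (rule finite_subset[of E "Pow V"]) (use Ee finV in auto)
  define q where "q = card E"
  obtain u where P: "pendant_vertices V E = {u}" using assms(5) card_1_singletonE by blast
  hence uV: "u \<in> V" and du: "degree E u = 1" unfolding pendant_vertices_def by auto
  obtain e where Ie: "incident_edges E u = {e}" using du unfolding degree_def using card_1_singletonE by blast
  hence eE: "e \<in> E" and ue: "u \<in> e" unfolding incident_edges_def by auto
  obtain v where ev: "e = {u, v}" and uv: "u \<noteq> v"
  proof -
    have "card e = 2" using Ee eE by auto
    then obtain x y where "e = {x,y}" "x \<noteq> y" by (meson card_2_iff)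
    thus ?thesis using that ue by auto
  qed
  have vV: "v \<in> V" using Ee eE ev by auto
  define a where "a = vertex_sum E f u"
  define b where "b = vertex_sum E f v"
  have aval: "a = f e" unfolding a_def vertex_sum_def Ie by simp
  have fe: "f e \<in> {1..q}" using bij eE unfolding q_def bij_betw_def by auto
  have ab: "a \<noteq> b" unfolding a_def b_def using adj[OF uV vV] eE ev unfolding adjacent_def by auto
  show "3 \<le> color_number V E f"
  proof (rule ccontr)
    assume "\<not> 3 \<le> color_number V E f"
    hence c2: "card (vertex_sum E f ` V) \<le> 2" unfolding color_number_def by simp
    have sub: "{a, b} \<subseteq> vertex_sum E f ` V" using uV vV a_def b_def by auto
    have img: "vertex_sum E f ` V = {a, b}"
    proof -
      have "card {a,b} = 2" using ab by simp
      moreover have "finite (vertex_sum E f ` V)" using finV by simp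
      ultimately show ?thesis using sub c2 by (metis card_seteq)
    qed
    define X where "X = {x\<in>V. vertex_sum E f x = a}"
    have finX: "finite X" using finV X_def by simp
    have uX: "u \<in> X" using uV a_def X_def by simp
    have cardX: "\<And>e'. e' \<in> E \<Longrightarrow> card (e' \<inter> X) = 1"
    proof -
      fix e' assume e'E: "e' \<in> E"
      then obtain x y where xy: "e' = {x,y}" "x \<noteq> y" using Ee by (meson card_2_iff)
      hence xV: "x \<in> V" and yV: "y \<in> V" using Ee e'E by auto
      have nxy: "vertex_sum E f x \<noteq> vertex_sum E f y"
        using adj[OF xV yV] e'E xy unfolding adjacent_def by auto
      have "vertex_sum E f x \<in> {a,b}" "vertex_sum E f y \<in> {a,b}" using img xV yV by auto
      then consider "vertex_sum E f x = a" "vertex_sum E f y \<noteq> a" | "vertex_sum E f y = a" "vertex_sum E f x \<noteq> a"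
        using nxy by auto
      then show "card (e' \<inter> X) = 1"
      proof cases
        case 1
        hence "e' \<inter> X = {x}" using xy xV X_def by auto
        thus ?thesis by simp
      next
        case 2
        hence "e' \<inter> X = {y}" using xy yV X_def by auto
        thus ?thesis by simp
      qed
    qed
    have S1: "(\<Sum>x\<in>X. vertex_sum E f x) = (\<Sum>e\<in>E. f e)"
      unfolding vertex_sum_def using double_count[OF finE finX, of f] cardX by simp
    have "(\<Sum>x\<in>X. vertex_sum E f x) = card X * a" using X_def by simp
    moreover have "(\<Sum>e\<in>E. f e) = (\<Sum>i\<in>{1..q}. i)"
      using sum.reindex_bij_betw[OF bij, of id] q_def by simp
    moreover have "2 * (\<Sum>i\<in>{1..q}. i) = q * (q + 1)"
      by (induction q) auto
    ultimately have eq1: "2 * (card X * a) = q * (q + 1)" using S1 by simp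
    have S2: "(\<Sum>x\<in>X. degree E x) = q"
      unfolding degree_def q_def using double_count[OF finE finX, of "\<lambda>_. 1"] cardX by simp
    have deg2: "\<And>x. x \<in> X - {u} \<Longrightarrow> 2 \<le> degree E x"
    proof -
      fix x assume xX: "x \<in> X - {u}"
      hence xV: "x \<in> V" and sx: "vertex_sum E f x = a" using X_def by auto
      have "degree E x \<noteq> 1" using P xX xV unfolding pendant_vertices_def by auto
      moreover have "degree E x \<noteq> 0"
      proof
        assume "degree E x = 0"
        moreover have "finite (incident_edges E x)" using finE unfolding incident_edges_def by simp
        ultimately have "incident_edges E x = {}" unfolding degree_def by simp
        hence "vertex_sum E f x = 0" unfolding vertex_sum_def by simp
        thus False using sx aval fe by simp
      qed
      ultimately show "2 \<le> degree E x" by simp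
    qed
    have "(\<Sum>x\<in>X. degree E x) = degree E u + (\<Sum>x\<in>X - {u}. degree E x)"
      using finX uX by (simp add: sum.remove)
    moreover have "(\<Sum>x\<in>X - {u}. degree E x) \<ge> (\<Sum>x\<in>X - {u}. 2)"
      using deg2 by (rule sum_mono)
    moreover have "card (X - {u}) + 1 = card X" using finX uX
      by (metis card_Suc_Diff1 Suc_eq_plus1)
    ultimately have ineq1: "2 * card X \<le> q + 1" using S2 du by simp
    have "a \<le> q" using aval fe by simp
    hence "2 * (card X * a) \<le> 2 * (card X * q)" by (simp add: mult_le_mono2)
    hence "q * (q + 1) \<le> q * (2 * card X)" unfolding eq1[symmetric] by (simp add: algebra_simps)
    moreover have "q > 0" using fe by simp
    ultimately have "q + 1 \<le> 2 * card X" by (metis mult_le_cancel1 gr_implies_not0)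
    hence "q + 1 = 2 * card X" using ineq1 by simp
    thus False using assms(4) q_def by presburger
  qed
qed

end
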